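(* Let $\lambda>0$. For every irrational $\alpha$ and every $\theta\in\mathbb{T}_0$, neither $\lambda$ nor $-\lambda$ is an eigenvalue of $\mathcal{H}_\theta$.
   Context: $\mathbb{T}=\mathbb{R}/\mathbb{Z}$, $\mathbb{T}_0=\{\theta\in\mathbb{T}:\cos 2\pi(n\alpha+\theta)\neq 0\ \forall n\in\mathbb{Z}\}$. For $\theta\in\mathbb{T}$, $n\in\mathbb{Z}$ put $v(\theta,n)=\cos2\pi((n-1)\alpha+\theta)$ if $n$ is odd and $v(\theta,n)=\cos 2\pi(n\alpha+\theta)$ if $n$ is even; $c(\theta,n)=\lambda$ if $n$ is odd and $c(\theta,n)=\cos2\pi(n\alpha+\theta)$ if $n$ is even. For $\theta\in\mathbb{T}_0$, $\mathcal{H}_\theta$ acts on $\ell^2(\mathbb{Z})$ by $(\mathcal{H}_\theta u)(n)=c(\theta,n)u(n+1)+c(\theta,n-1)u(n-1)+v(\theta,n)u(n)$. *)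

theory Defs
  imports "HOL-Analysis.Analysis"
begin

text \<open>The circle T = R/Z is represented by real numbers theta; all quantities
  below are 1-periodic in theta.\<close>

definition T0 :: "real \<Rightarrow> real set" where
  "T0 \<alpha> = {\<theta>. \<forall>n::int. cos (2 * pi * (real_of_int n * \<alpha> + \<theta>)) \<noteq> 0}"

definition vpot :: "real \<Rightarrow> real \<Rightarrow> int \<Rightarrow> real" where
  "vpot \<alpha> \<theta> n = (if odd n then cos (2 * pi * (real_of_int (n - 1) * \<alpha> + \<theta>))
                     else cos (2 * pi * (real_of_int n * \<alpha> + \<theta>)))"

definition coef :: "real \<Rightarrow> real \<Rightarrow> real \<Rightarrow> int \<Rightarrow> real" where
  "coef lam \<alpha> \<theta> n = (if odd n then lam else cos (2 * pi * (real_of_int n * \<alpha> + \<theta>)))"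

definition Hop :: "real \<Rightarrow> real \<Rightarrow> real \<Rightarrow> (int \<Rightarrow> complex) \<Rightarrow> int \<Rightarrow> complex" where
  "Hop lam \<alpha> \<theta> u n = complex_of_real (coef lam \<alpha> \<theta> n) * u (n + 1)
                    + complex_of_real (coef lam \<alpha> \<theta> (n - 1)) * u (n - 1)
                    + complex_of_real (vpot \<alpha> \<theta> n) * u n"

definition l2 :: "(int \<Rightarrow> complex) set" where
  "l2 = {u. (\<lambda>n. (norm (u n))\<^sup>2) summable_on UNIV}"

definition is_eigenvalue :: "real \<Rightarrow> real \<Rightarrow> real \<Rightarrow> complex \<Rightarrow> bool" where
  "is_eigenvalue lam \<alpha> \<theta> E \<longleftrightarrow>
     (\<exists>u \<in> l2. u \<noteq> (\<lambda>_. 0) \<and> (\<forall>n. Hop lam \<alpha> \<theta> u n = E * u n))"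

end

theory Submission
  imports Defs
begin

lemma l2_tendsto:
  assumes "u \<in> l2" "inj g"
  shows "(\<lambda>k::nat. u (g k)) \<longlonglongrightarrow> 0"
proof -
  have "(\<lambda>n. (norm (u n))\<^sup>2) summable_on UNIV" using assms(1) by (simp add: l2_def)
  hence "(\<lambda>n. (norm (u n))\<^sup>2) summable_on range g"
    by (rule summable_on_subset_banach) simp
  hence "(\<lambda>n. (norm (u n))\<^sup>2) \<circ> g summable_on UNIV"
    using summable_on_reindex[of g UNIV] assms(2) by auto
  hence "summable (\<lambda>k. (norm (u (g k)))\<^sup>2)"
    by (subst (asm) summable_on_UNIV_nonneg_real_iff) (auto simp: o_def)
  hence "(\<lambda>k. (norm (u (g k)))\<^sup>2) \<longlonglongrightarrow> 0" by (rule summable_LIMSEQ_zero)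
  hence "(\<lambda>k. sqrt ((norm (u (g k)))\<^sup>2)) \<longlonglongrightarrow> sqrt 0" by (rule tendsto_real_sqrt)
  hence "(\<lambda>k. norm (u (g k))) \<longlonglongrightarrow> 0" by simp
  thus ?thesis by (simp add: tendsto_norm_zero_iff)
qed

lemma const_int:
  fixes f :: "int \<Rightarrow> real"
  assumes "\<And>k. f (k + 1) = f k"
  shows "f k = f 0"
proof (induction k rule: int_induct[where k=0])
  case base then show ?case by simp
next
  case (step1 i) then show ?case using assms[of i] by simp
next
  case (step2 i) then show ?case using assms[of "i - 1"] by simp
qed

lemma const_zero:
  assumes "(\<lambda>k::nat. f k) \<longlonglongrightarrow> (0::real)" "\<And>k. f k = c"
  shows "c = 0"
proof -
  have "(\<lambda>k::nat. c) \<longlonglongrightarrow> 0" using assms by simp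
  thus ?thesis using LIMSEQ_const_iff by blast
qed

lemma main:
  fixes lam \<alpha> \<theta> :: real and \<sigma> :: complex
  assumes lam: "lam > 0" and th: "\<theta> \<in> T0 \<alpha>" and sig: "\<sigma> = 1 \<or> \<sigma> = -1"
  shows "\<not> is_eigenvalue lam \<alpha> \<theta> (\<sigma> * complex_of_real lam)"
proof
  assume "is_eigenvalue lam \<alpha> \<theta> (\<sigma> * complex_of_real lam)"
  then obtain u where u: "u \<in> l2" "u \<noteq> (\<lambda>_. 0)"
    and eq: "\<And>n. Hop lam \<alpha> \<theta> u n = \<sigma> * complex_of_real lam * u n"
    unfolding is_eigenvalue_def by blast
  define c where "c k = cos (2 * pi * (real_of_int (2 * k) * \<alpha> + \<theta>))" for k :: int
  have cnz: "c k \<noteq> 0" for k using th unfolding T0_def c_def by blast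
  have ev: "complex_of_real (c k) * (u (2*k+1) + u (2*k)) = lam * (\<sigma> * u (2*k) - u (2*k-1))" for k
  proof -
    have "odd (2*k - 1)" by simp
    hence "Hop lam \<alpha> \<theta> u (2*k) = complex_of_real (c k) * u (2*k+1) + lam * u (2*k-1) + c k * u (2*k)"
      by (simp add: Hop_def coef_def vpot_def c_def)
    thus ?thesis using eq[of "2*k"] by (simp add: algebra_simps)
  qed
  have od: "complex_of_real (c k) * (u (2*k+1) + u (2*k)) = lam * (\<sigma> * u (2*k+1) - u (2*k+2))" for k
  proof -
    have a: "2*k+1+1 = 2*k+2" "2*k+1-1 = 2*k" by simp_all
    have "Hop lam \<alpha> \<theta> u (2*k+1) = lam * u (2*k+2) + complex_of_real (c k) * u (2*k) + c k * u (2*k+1)"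
      unfolding Hop_def coef_def vpot_def c_def a by simp
    thus ?thesis using eq[of "2*k+1"] by (simp add: algebra_simps)
  qed
  define t where "t k = \<sigma> * u (2*k) - u (2*k-1)" for k
  have t1: "\<sigma> * u (2*k+1) - u (2*k+2) = t k" for k
    using ev[of k] od[of k] lam unfolding t_def by simp
  have s2: "\<sigma> * \<sigma> = 1" using sig by auto
  have tn: "t (k+1) = - \<sigma> * t k" for k
  proof -
    have "t (k+1) = \<sigma> * u (2*k+2) - u (2*k+1)" unfolding t_def by (simp add: algebra_simps)
    also have "\<dots> = - \<sigma> * (\<sigma> * u (2*k+1) - u (2*k+2))" using s2 by (simp add: algebra_simps)
    finally show ?thesis using t1 by simp
  qed
  have nsig: "norm \<sigma> = 1" using sig by auto
  have tc: "norm (t k) = norm (t 0)" for k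
    by (rule const_int[of "\<lambda>k. norm (t k)"]) (simp add: tn norm_mult nsig)
  have "(\<lambda>k::nat. u (2 * int k)) \<longlonglongrightarrow> 0"
    by (rule l2_tendsto[OF u(1)]) (auto simp: inj_def)
  moreover have "(\<lambda>k::nat. u (2 * int k - 1)) \<longlonglongrightarrow> 0"
    by (rule l2_tendsto[OF u(1)]) (auto simp: inj_def)
  ultimately have "(\<lambda>k::nat. t (int k)) \<longlonglongrightarrow> 0"
    unfolding t_def by (auto intro!: tendsto_eq_intros)
  hence "(\<lambda>k::nat. norm (t (int k))) \<longlonglongrightarrow> 0" by (simp add: tendsto_norm_zero_iff)
  hence "norm (t 0) = 0" using const_zero tc by blast
  hence t0: "t k = 0" for k using tc[of k] by simp
  have s0: "u (2*k+1) = - u (2*k)" for k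
    using ev[of k] t0[of k] cnz[of k] unfolding t_def by (simp add: add_eq_0_iff)
  have "u (2*(k+1)) = - \<sigma> * u (2*k)" for k
  proof -
    have "\<sigma> * u (2*k+1) = u (2*k+2)" using t1[of k] t0[of k] by simp
    hence "u (2*k+2) = - \<sigma> * u (2*k)" using s0[of k] by simp
    thus ?thesis by (simp add: algebra_simps)
  qed
  hence uc: "norm (u (2*k)) = norm (u 0)" for k
    using const_int[of "\<lambda>k. norm (u (2*k))"] by (simp add: norm_mult nsig)
  have "(\<lambda>k::nat. norm (u (2 * int k))) \<longlonglongrightarrow> 0"
    using l2_tendsto[OF u(1), of "\<lambda>k. 2 * int k"] by (auto simp: inj_def tendsto_norm_zero_iff)
  hence "norm (u 0) = 0" using const_zero uc by blast
  hence ue: "u (2*k) = 0" for k using uc[of k] by simp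
  have "u n = 0" for n
  proof (cases "even n")
    case True then obtain k where "n = 2*k" by blast
    then show ?thesis using ue by simp
  next
    case False then obtain k where "n = 2*k+1" using oddE by blast
    then show ?thesis using ue s0 by simp
  qed
  thus False using u(2) by auto
qed

theorem lemma3p4:
  fixes lam \<alpha> \<theta> :: real
  assumes "lam > 0"
    and "\<alpha> \<notin> \<rat>"
    and "\<theta> \<in> T0 \<alpha>"
  shows "\<not> is_eigenvalue lam \<alpha> \<theta> (complex_of_real lam)
       \<and> \<not> is_eigenvalue lam \<alpha> \<theta> (complex_of_real (- lam))"
  using main[OF assms(1,3), of 1] main[OF assms(1,3), of "-1"] by simp

end
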